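(* Let $T$ be a sequence of length $n$ over $\mathbb{A}$ and $I\subseteq\mathbb{A}$ a nonempty finite itemset. For every window length $x$ with $1\le x\le n$, $$\mathrm{co}(T,I,x)=(n-x+1)-\sum_{k=x}^{n}(k-x+1)\,H[k],$$ where $H[k]=\sum_{\emptyset\neq A\subseteq I}(-1)^{|A|+1}N_A(k)$.
   Context: A sequence $T=(T[0],\dots,T[n-1])$ has entries in $\mathbb{A}$. For $1\le x\le n$ and $x-1\le i\le n-1$ the window $\omega(i,x)$ is the contiguous block $(T[i-x+1],\dots,T[i])$. The co-occurrence count $\mathrm{co}(T,I,x)$ is the number of indices $i\in\{x-1,\dots,n-1\}$ such that every element of $I$ occurs in $\omega(i,x)$. For $A\subseteq I$ nonempty, a maximal $A$-gap is a contiguous block $T[s..t]$ with $0\le s\le t\le n-1$ such that $T[j]\notin A$ for all $s\le j\le t$, and ($s=0$ or $T[s-1]\in A$) and ($t=n-1$ or $T[t+1]\in A$); its length is $t-s+1$. $N_A(k)$ denotes the number of maximal $A$-gaps of length $k$ in $T$. *)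

theory Defs
  imports Main
begin

definition window :: "'a list \<Rightarrow> nat \<Rightarrow> nat \<Rightarrow> 'a set" where
  "window T i x = {T ! j | j. i + 1 - x \<le> j \<and> j \<le> i}"

definition co :: "'a list \<Rightarrow> 'a set \<Rightarrow> nat \<Rightarrow> nat" where
  "co T I x = card {i. x - 1 \<le> i \<and> i \<le> length T - 1 \<and> I \<subseteq> window T i x}"

definition max_gap :: "'a list \<Rightarrow> 'a set \<Rightarrow> nat \<Rightarrow> nat \<Rightarrow> bool" where
  "max_gap T A s t \<longleftrightarrow> s \<le> t \<and> t \<le> length T - 1 \<and> t < length T \<and>
     (\<forall>j. s \<le> j \<and> j \<le> t \<longrightarrow> T ! j \<notin> A) \<and>
     (s = 0 \<or> T ! (s - 1) \<in> A) \<and>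
     (t = length T - 1 \<or> T ! (t + 1) \<in> A)"

definition N_gap :: "'a list \<Rightarrow> 'a set \<Rightarrow> nat \<Rightarrow> nat" where
  "N_gap T A k = card {(s, t). max_gap T A s t \<and> t - s + 1 = k}"

definition H :: "'a list \<Rightarrow> 'a set \<Rightarrow> nat \<Rightarrow> int" where
  "H T I k = (\<Sum>A \<in> {A. A \<subseteq> I \<and> A \<noteq> {}}. (-1) ^ (card A + 1) * int (N_gap T A k))"

end

theory Submission imports Defs begin

lemma notin_window:
  assumes "x \<ge> 1" "x - 1 \<le> i"
  shows "a \<notin> window T i x \<longleftrightarrow> (\<forall>j. i + 1 - x \<le> j \<and> j \<le> i \<longrightarrow> T ! j \<noteq> a)"
  unfolding window_def by auto

lemma gap_unique:
  assumes g1: "max_gap T A s t" and g2: "max_gap T A s' t'"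
    and "s \<le> j" "j \<le> t" "s' \<le> j" "j \<le> t'"
  shows "s = s' \<and> t = t'"
proof -
  have "\<not> s < s'"
  proof
    assume "s < s'"
    then have "T ! (s' - 1) \<in> A" using g2 unfolding max_gap_def by auto
    moreover have "T ! (s' - 1) \<notin> A"
    proof -
      have "\<forall>j. s \<le> j \<and> j \<le> t \<longrightarrow> T ! j \<notin> A" using g1 unfolding max_gap_def by blast
      then show ?thesis using \<open>s < s'\<close> assms(5,4) by (auto dest: spec[where x="s'-1"])
    qed
    ultimately show False by simp
  qed
  moreover have "\<not> s' < s"
  proof
    assume "s' < s"
    then have "T ! (s - 1) \<in> A" using g1 unfolding max_gap_def by auto
    moreover have "T ! (s - 1) \<notin> A"
    proof -
      have "\<forall>j. s' \<le> j \<and> j \<le> t' \<longrightarrow> T ! j \<notin> A" using g2 unfolding max_gap_def by blast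
      then show ?thesis using \<open>s' < s\<close> assms(3,6) by (auto dest: spec[where x="s-1"])
    qed
    ultimately show False by simp
  qed
  moreover have "\<not> t < t'"
  proof
    assume "t < t'"
    then have "T ! (t + 1) \<in> A" using g1 g2 unfolding max_gap_def by auto
    moreover have "T ! (t + 1) \<notin> A"
    proof -
      have "\<forall>j. s' \<le> j \<and> j \<le> t' \<longrightarrow> T ! j \<notin> A" using g2 unfolding max_gap_def by blast
      then show ?thesis using \<open>t < t'\<close> assms(4,5) by (auto dest: spec[where x="t+1"])
    qed
    ultimately show False by simp
  qed
  moreover have "\<not> t' < t"
  proof
    assume "t' < t"
    then have "T ! (t' + 1) \<in> A" using g1 g2 unfolding max_gap_def by auto
    moreover have "T ! (t' + 1) \<notin> A"
    proof -
      have "\<forall>j. s \<le> j \<and> j \<le> t \<longrightarrow> T ! j \<notin> A" using g1 unfolding max_gap_def by blast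
      then show ?thesis using \<open>t' < t\<close> assms(3,6) by (auto dest: spec[where x="t'+1"])
    qed
    ultimately show False by simp
  qed
  ultimately show ?thesis by auto
qed

lemma gap_exists:
  assumes "1 \<le> x" "x - 1 \<le> i" "i < length T"
    and av: "\<forall>j. i + 1 - x \<le> j \<and> j \<le> i \<longrightarrow> T ! j \<notin> A"
  shows "\<exists>s t. max_gap T A s t \<and> s + x - 1 \<le> i \<and> i \<le> t"
proof -
  define P where "P j \<longleftrightarrow> (\<forall>m. j \<le> m \<and> m \<le> i \<longrightarrow> T ! m \<notin> A)" for j
  define Q where "Q j \<longleftrightarrow> j < length T \<and> (\<forall>m. i \<le> m \<and> m \<le> j \<longrightarrow> T ! m \<notin> A)" for j
  define s where "s = (LEAST j. P j)"
  define t where "t = (GREATEST j. Q j)"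
  have P0: "P (i + 1 - x)" using av unfolding P_def by auto
  have Ps: "P s" unfolding s_def by (rule LeastI[of P, OF P0])
  have sle: "s \<le> i + 1 - x" using P0 unfolding s_def by (rule Least_le)
  have Qi: "Q i" using av assms unfolding Q_def by auto
  have Qb: "\<And>y. Q y \<Longrightarrow> y \<le> length T" unfolding Q_def by auto
  have Qt: "Q t" unfolding t_def by (rule GreatestI_nat[of Q, OF Qi Qb])
  have ilt: "i \<le> t" unfolding t_def by (rule Greatest_le_nat[of Q, OF Qi Qb])
  have sleft: "s = 0 \<or> T ! (s - 1) \<in> A"
  proof (rule ccontr)
    assume "\<not> ?thesis"
    then have "P (s - 1)" using Ps unfolding P_def
    proof (intro allI impI)
      fix m assume h: "\<not> (s = 0 \<or> T ! (s - 1) \<in> A)" "\<forall>m. s \<le> m \<and> m \<le> i \<longrightarrow> T ! m \<notin> A" "s - 1 \<le> m \<and> m \<le> i"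
      show "T ! m \<notin> A"
      proof (cases "m = s - 1")
        case False then show ?thesis using h by auto
      qed (use h in auto)
    qed
    then have "s \<le> s - 1" unfolding s_def by (rule Least_le)
    with \<open>\<not> ?thesis\<close> show False by auto
  qed
  have tright: "t = length T - 1 \<or> T ! (t + 1) \<in> A"
  proof (rule ccontr)
    assume "\<not> ?thesis"
    then have "Q (t + 1)" using Qt unfolding Q_def
      by (auto simp: le_Suc_eq)
    then have "t + 1 \<le> t" unfolding t_def by (rule Greatest_le_nat[of Q, OF _ Qb])
    then show False by simp
  qed
  have "max_gap T A s t"
    unfolding max_gap_def
  proof (intro conjI)
    show "s \<le> t" using sle ilt assms(1) by linarith
    show "t < length T" using Qt unfolding Q_def by auto
    then show "t \<le> length T - 1" by auto
    show "\<forall>j. s \<le> j \<and> j \<le> t \<longrightarrow> T ! j \<notin> A"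
    proof (intro allI impI)
      fix j assume "s \<le> j \<and> j \<le> t"
      then show "T ! j \<notin> A" using Ps Qt unfolding P_def Q_def
        by (cases "j \<le> i") auto
    qed
  qed (use sleft tright in auto)
  moreover have "s + x - 1 \<le> i" using sle assms by linarith
  ultimately show ?thesis using ilt by blast
qed

lemma count_gaps:
  assumes x1: "1 \<le> x" and xn: "x \<le> length T"
  shows "card {i. x - 1 \<le> i \<and> i \<le> length T - 1 \<and> (\<forall>j. i + 1 - x \<le> j \<and> j \<le> i \<longrightarrow> T ! j \<notin> A)}
    = (\<Sum>k = x..length T. (k - x + 1) * N_gap T A k)"
proof -
  define n where "n = length T"
  define D where "D = {i. x - 1 \<le> i \<and> i \<le> length T - 1 \<and> (\<forall>j. i + 1 - x \<le> j \<and> j \<le> i \<longrightarrow> T ! j \<notin> A)}"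
  define G where "G = {(s, t). max_gap T A s t}"
  define len where "len g = snd g - fst g + 1" for g :: "nat \<times> nat"
  define iv where "iv g = {fst g + x - 1 .. snd g}" for g :: "nat \<times> nat"
  have Gsub: "G \<subseteq> {..<n} \<times> {..<n}" unfolding G_def n_def max_gap_def by auto
  have finG: "finite G" by (rule finite_subset[OF Gsub]) auto
  have Deq: "D = (\<Union>g\<in>G. iv g)"
  proof
    show "D \<subseteq> (\<Union>g\<in>G. iv g)"
    proof
      fix i assume "i \<in> D"
      then have h: "x - 1 \<le> i" "i < length T" "\<forall>j. i + 1 - x \<le> j \<and> j \<le> i \<longrightarrow> T ! j \<notin> A"
        using xn x1 unfolding D_def by auto
      obtain s t where "max_gap T A s t" "s + x - 1 \<le> i" "i \<le> t"
        using gap_exists[OF x1 h] by blast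
      then show "i \<in> (\<Union>g\<in>G. iv g)" unfolding G_def iv_def by force
    qed
    show "(\<Union>g\<in>G. iv g) \<subseteq> D"
    proof
      fix i assume "i \<in> (\<Union>g\<in>G. iv g)"
      then obtain s t where g: "max_gap T A s t" "s + x - 1 \<le> i" "i \<le> t"
        unfolding G_def iv_def by auto
      then have "t \<le> length T - 1" "\<forall>j. s \<le> j \<and> j \<le> t \<longrightarrow> T ! j \<notin> A"
        unfolding max_gap_def by auto
      then show "i \<in> D" unfolding D_def using g x1 by auto
    qed
  qed
  have disj: "\<forall>g\<in>G. \<forall>h\<in>G. g \<noteq> h \<longrightarrow> iv g \<inter> iv h = {}"
  proof (intro ballI impI)
    fix g h assume gh: "g \<in> G" "h \<in> G" "g \<noteq> h"
    show "iv g \<inter> iv h = {}"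
    proof (rule ccontr)
      assume "iv g \<inter> iv h \<noteq> {}"
      then obtain i where i: "i \<in> iv g" "i \<in> iv h" by blast
      obtain s t s' t' where gg: "g = (s, t)" "h = (s', t')" by (cases g, cases h)
      have "s = s' \<and> t = t'"
        by (rule gap_unique[of T A s t s' t' i]) (use gh gg i x1 in \<open>auto simp: G_def iv_def\<close>)
      then show False using gh gg by auto
    qed
  qed
  have "card D = (\<Sum>g\<in>G. card (iv g))"
    unfolding Deq by (rule card_UN_disjoint[OF finG _ disj]) (auto simp: iv_def)
  also have "\<dots> = (\<Sum>g\<in>G. len g + 1 - x)"
  proof (rule sum.cong[OF refl])
    fix g assume "g \<in> G"
    then have "fst g \<le> snd g" unfolding G_def max_gap_def by auto
    then show "card (iv g) = len g + 1 - x" unfolding iv_def len_def using x1 by auto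
  qed
  also have "\<dots> = (\<Sum>g\<in>{g\<in>G. x \<le> len g}. len g + 1 - x)"
    by (rule sum.mono_neutral_right[OF finG]) auto
  also have "\<dots> = (\<Sum>k\<in>{x..n}. \<Sum>g\<in>{g\<in>{g\<in>G. x \<le> len g}. len g = k}. len g + 1 - x)"
  proof (rule sum.group[symmetric])
    show "finite {g\<in>G. x \<le> len g}" using finG by auto
    show "len ` {g \<in> G. x \<le> len g} \<subseteq> {x..n}"
      unfolding G_def len_def max_gap_def n_def by auto
  qed simp
  also have "\<dots> = (\<Sum>k = x..n. (k - x + 1) * N_gap T A k)"
  proof (rule sum.cong[OF refl])
    fix k assume k: "k \<in> {x..n}"
    have "{g\<in>{g\<in>G. x \<le> len g}. len g = k} = {(s, t). max_gap T A s t \<and> t - s + 1 = k}"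
      using k unfolding G_def len_def by auto
    then have "(\<Sum>g\<in>{g\<in>{g\<in>G. x \<le> len g}. len g = k}. len g + 1 - x)
        = (\<Sum>g\<in>{(s, t). max_gap T A s t \<and> t - s + 1 = k}. k + 1 - x)"
      by (intro sum.cong) (auto simp: len_def)
    also have "\<dots> = (k - x + 1) * N_gap T A k"
      using k by (simp add: N_gap_def Suc_diff_le algebra_simps)
    finally show "(\<Sum>g\<in>{g\<in>{g\<in>G. x \<le> len g}. len g = k}. len g + 1 - x) = (k - x + 1) * N_gap T A k" .
  qed
  finally show ?thesis unfolding D_def n_def .
qed

theorem mainTheorem2:
  fixes T :: "'a list" and I :: "'a set" and x :: nat
  assumes "finite I" and "I \<noteq> {}"
    and "1 \<le> x" and "x \<le> length T"
  shows "int (co T I x) =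
    int (length T - x + 1) - (\<Sum>k = x..length T. int (k - x + 1) * H T I k)"
proof -
  note x1 = \<open>1 \<le> x\<close> and xn = \<open>x \<le> length T\<close>
  define n where "n = length T"
  define W where "W = {x - 1..n - 1}"
  define B where "B a = {i. a \<notin> window T i x}" for a
  define Ds where "Ds A = {i. x - 1 \<le> i \<and> i \<le> length T - 1 \<and> (\<forall>j. i + 1 - x \<le> j \<and> j \<le> i \<longrightarrow> T ! j \<notin> A)}" for A
  define f where "f S = int (card (W \<inter> S))" for S
  define Sset where "Sset = {A. A \<subseteq> I \<and> A \<noteq> {}}"
  have finW: "finite W" unfolding W_def by auto
  have cardW: "card W = n - x + 1" unfolding W_def n_def using x1 xn by auto
  have coeq: "{i. x - 1 \<le> i \<and> i \<le> length T - 1 \<and> I \<subseteq> window T i x} = W - (W \<inter> \<Union>(B ` I))"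
    unfolding W_def B_def n_def by auto
  have "card W = card (W - (W \<inter> \<Union>(B ` I))) + card (W \<inter> \<Union>(B ` I))"
    using finW by (metis Int_lower1 card_Diff_subset finite_Int le_add_diff_inverse2 card_mono)
  then have co1: "int (co T I x) = int (n - x + 1) - f (\<Union>(B ` I))"
    unfolding co_def coeq f_def cardW by linarith
  have ie: "f (\<Union>(B ` I)) = (\<Sum>A\<in>Sset. (- 1) ^ (card A + 1) * f (\<Inter>(B ` A)))"
    unfolding Sset_def
  proof (rule Incl_Excl_UN[OF _ \<open>finite I\<close>])
    fix S U :: "nat set" assume "disjnt S U"
    then have "W \<inter> (S \<union> U) = (W \<inter> S) \<union> (W \<inter> U)" "(W \<inter> S) \<inter> (W \<inter> U) = {}"
      unfolding disjnt_def by auto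
    then show "f (S \<union> U) = f S + f U"
      unfolding f_def using finW by (simp add: card_Un_disjoint)
  qed
  have fD: "f (\<Inter>(B ` A)) = int (card (Ds A))" if "A \<in> Sset" for A
  proof -
    have "W \<inter> \<Inter>(B ` A) = Ds A"
    proof (rule set_eqI)
      fix i
      show "i \<in> W \<inter> \<Inter>(B ` A) \<longleftrightarrow> i \<in> Ds A"
      proof (cases "i \<in> W")
        case True
        then have "x - 1 \<le> i" unfolding W_def by auto
        have w: "(\<forall>a\<in>A. a \<notin> window T i x) \<longleftrightarrow> (\<forall>j. i + 1 - x \<le> j \<and> j \<le> i \<longrightarrow> T ! j \<notin> A)"
          unfolding window_def by blast
        show ?thesis using True w
          unfolding B_def Ds_def W_def n_def by auto
      next
        case False
        then show ?thesis unfolding Ds_def W_def n_def using that Sset_def by auto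
      qed
    qed
    then show ?thesis unfolding f_def by simp
  qed
  have cD: "int (card (Ds A)) = (\<Sum>k = x..n. int (k - x + 1) * int (N_gap T A k))" for A
    unfolding Ds_def count_gaps[OF x1 xn] n_def of_nat_sum
    by (rule sum.cong[OF refl]) (simp only: of_nat_mult)
  have "(\<Sum>k = x..n. int (k - x + 1) * H T I k)
      = (\<Sum>k = x..n. \<Sum>A\<in>Sset. (- 1) ^ (card A + 1) * (int (k - x + 1) * int (N_gap T A k)))"
    unfolding H_def Sset_def by (simp add: sum_distrib_left algebra_simps)
  also have "\<dots> = (\<Sum>A\<in>Sset. \<Sum>k = x..n. (- 1) ^ (card A + 1) * (int (k - x + 1) * int (N_gap T A k)))"
    by (rule sum.swap)
  also have "\<dots> = (\<Sum>A\<in>Sset. (- 1) ^ (card A + 1) * f (\<Inter>(B ` A)))"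
    by (rule sum.cong[OF refl]) (simp add: fD cD sum_distrib_left)
  finally show ?thesis using co1 ie n_def by simp
qed

end
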